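(* Let $\Gamma$ be a graph, possibly with some 2-fold edges. Then $\Gamma$ is the family diagram of at most one family of spherical simplices whose dihedral angles lie in $\{\frac{\pi}{2},\frac{\pi}{3},\frac{2\pi}{3},\frac{\pi}{4},\frac{3\pi}{4}\}$ (families considered up to isometry).
   Context: A spherical simplex in $S^n\subset\mathbb{R}^{n+1}$ is given by unit outer normals $f_1,\dots,f_{n+1}$ to its facets; the hyperplanes $f_i^\perp$ cut $S^n$ into $2^{n+1}$ simplices encoded by $\pm f_1,\dots,\pm f_{n+1}$, called a family. For a simplex whose dihedral angles are of the form $\pi/k$ or $\pi(k-1)/k$, its family diagram is the graph with vertices $v_i$ corresponding to the $f_i$, where $v_i$ and $v_j$ are joined by a $(k-2)$-fold edge if the angle between $f_i,f_j$ is $\pi/k$ or $\pi(k-1)/k$, and are not joined if $f_i\perp f_j$. All simplices of a family have the same family diagram. *)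

theory Defs
  imports "HOL-Analysis.Analysis"
begin

text \<open>A family of spherical simplices in S^n, a subset of R^(n+1), is encoded by n+1 unit
  outer normals f i, indexed by the finite type 'n with CARD('n) = n+1, living in
  real^'n (so the ambient space has dimension n+1).\<close>

definition simplex_normals :: "('n::finite \<Rightarrow> real^'n) \<Rightarrow> bool" where
  "simplex_normals f \<longleftrightarrow> (\<forall>i. norm (f i) = 1) \<and> inj f \<and> independent (range f)"

definition normal_angle :: "('n::finite \<Rightarrow> real^'n) \<Rightarrow> 'n \<Rightarrow> 'n \<Rightarrow> real" where
  "normal_angle f i j = arccos (f i \<bullet> f j)"

definition dihedral_angle :: "('n::finite \<Rightarrow> real^'n) \<Rightarrow> 'n \<Rightarrow> 'n \<Rightarrow> real" where
  "dihedral_angle f i j = pi - normal_angle f i j"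

text \<open>Family diagram: v_i, v_j joined by a (k-2)-fold edge if the angle between f i, f j
  is pi/k or pi(k-1)/k (k = 2 meaning no edge, i.e. orthogonality).\<close>
definition family_diagram :: "('n::finite \<Rightarrow> real^'n) \<Rightarrow> 'n \<Rightarrow> 'n \<Rightarrow> nat" where
  "family_diagram f i j =
     (THE m. \<exists>k::nat. k \<ge> 2 \<and> m = k - 2 \<and>
        (normal_angle f i j = pi / real k \<or> normal_angle f i j = pi * real (k - 1) / real k))"

text \<open>The family: the set of lines \<plusminus>f i (it determines all 2^(n+1) simplices).\<close>
definition family_vectors :: "('n::finite \<Rightarrow> real^'n) \<Rightarrow> (real^'n) set" where
  "family_vectors f = {v. \<exists>i. v = f i \<or> v = - f i}"

end

theory Submission
  imports Defs "HOL-Analysis.Analysis"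
begin
definition walk :: "('a \<Rightarrow> 'a \<Rightarrow> bool) \<Rightarrow> (nat \<Rightarrow> 'a) \<Rightarrow> nat \<Rightarrow> bool" where
  "walk adj c k \<longleftrightarrow> (\<forall>t<k. adj (c t) (c (Suc t)))"

definition wP :: "('a \<Rightarrow> 'a \<Rightarrow> real) \<Rightarrow> (nat \<Rightarrow> 'a) \<Rightarrow> nat \<Rightarrow> real" where
  "wP e c k = (\<Prod>t<k. e (c t) (c (Suc t)))"

definition wcat :: "(nat \<Rightarrow> 'a) \<Rightarrow> nat \<Rightarrow> (nat \<Rightarrow> 'a) \<Rightarrow> nat \<Rightarrow> 'a" where
  "wcat p m q = (\<lambda>t. if t \<le> m then p t else q (t - m))"

definition wseg :: "(nat \<Rightarrow> 'a) \<Rightarrow> nat \<Rightarrow> nat \<Rightarrow> 'a" where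
  "wseg c i = (\<lambda>t. c (i + t))"

definition wedge :: "'a \<Rightarrow> 'a \<Rightarrow> nat \<Rightarrow> 'a" where
  "wedge x y = (\<lambda>t. if t = 0 then x else y)"

definition wrev :: "(nat \<Rightarrow> 'a) \<Rightarrow> nat \<Rightarrow> nat \<Rightarrow> 'a" where
  "wrev c k = (\<lambda>t. c (k - t))"

lemma wcat_eq: "p m = q 0 \<Longrightarrow> t \<ge> m \<Longrightarrow> wcat p m q t = q (t - m)"
  by (auto simp: wcat_def)

lemma wcat_0[simp]: "wcat p m q 0 = p 0" by (simp add: wcat_def)

lemma wcat_end: "p m = q 0 \<Longrightarrow> wcat p m q (m + n) = q n"
  by (simp add: wcat_eq)

lemma walk_cat:
  assumes "walk adj p m" "walk adj q n" "p m = q 0"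
  shows "walk adj (wcat p m q) (m + n)"
  unfolding walk_def
proof (intro allI impI)
  fix t assume t: "t < m + n"
  show "adj (wcat p m q t) (wcat p m q (Suc t))"
  proof (cases "t < m")
    case True then show ?thesis using assms(1) by (simp add: wcat_def walk_def)
  next
    case False
    then have "wcat p m q t = q (t - m)" "wcat p m q (Suc t) = q (Suc (t - m))"
      using assms(3) by (auto simp: wcat_eq Suc_diff_le)
    then show ?thesis using assms(2) t False unfolding walk_def by auto
  qed
qed

lemma wP_cat:
  assumes "p m = q 0"
  shows "wP e (wcat p m q) (m + n) = wP e p m * wP e q n"
proof -
  have "wP e (wcat p m q) (m + n) = (\<Prod>t<m. e (wcat p m q t) (wcat p m q (Suc t))) *
        (\<Prod>t\<in>{m..<m+n}. e (wcat p m q t) (wcat p m q (Suc t)))"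
    unfolding wP_def lessThan_atLeast0 by (rule prod.atLeastLessThan_concat[symmetric]) auto
  also have "(\<Prod>t<m. e (wcat p m q t) (wcat p m q (Suc t))) = wP e p m"
    unfolding wP_def by (intro prod.cong) (auto simp: wcat_def)
  also have "(\<Prod>t\<in>{m..<m+n}. e (wcat p m q t) (wcat p m q (Suc t)))
      = (\<Prod>t\<in>{m..<m+n}. e (q (t - m)) (q (Suc (t - m))))"
    using assms by (intro prod.cong) (auto simp: wcat_eq Suc_diff_le)
  also have "\<dots> = wP e q n"
    unfolding wP_def
    using prod.shift_bounds_nat_ivl[of "\<lambda>t. e (q (t - m)) (q (Suc (t - m)))" 0 m n]
    by (simp add: lessThan_atLeast0 add.commute)
  finally show ?thesis .
qed

lemma walk_seg: "walk adj c k \<Longrightarrow> i \<le> j \<Longrightarrow> j \<le> k \<Longrightarrow> walk adj (wseg c i) (j - i)"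
  by (auto simp: walk_def wseg_def)

lemma walk_mono: "walk adj c k \<Longrightarrow> i \<le> k \<Longrightarrow> walk adj c i"
  by (auto simp: walk_def)

lemma walk_seg2: "walk adj c k \<Longrightarrow> i \<le> j \<Longrightarrow> j \<le> k \<Longrightarrow> walk adj (\<lambda>t. c (i + t)) (j - i)"
  by (auto simp: walk_def)

lemma wP_seg: "i \<le> j \<Longrightarrow> wP e (wseg c i) (j - i) = (\<Prod>t\<in>{i..<j}. e (c t) (c (Suc t)))"
  unfolding wP_def wseg_def
  using prod.shift_bounds_nat_ivl[of "\<lambda>t. e (c t) (c (Suc t))" 0 i "j - i"]
  by (simp add: lessThan_atLeast0 add.commute)

lemma wP_split3: "i \<le> j \<Longrightarrow> j \<le> k \<Longrightarrow>
   wP e c k = wP e (wseg c 0) i * wP e (wseg c i) (j - i) * wP e (wseg c j) (k - j)"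
  apply (simp add: wP_seg[of 0 i, simplified] wP_seg)
  unfolding wP_def lessThan_atLeast0
  by (simp add: prod.atLeastLessThan_concat)

lemma walk_edge: "adj x y \<Longrightarrow> walk adj (wedge x y) 1"
  by (simp add: walk_def wedge_def)

lemma wP_edge: "wP e (wedge x y) 1 = e x y"
  by (simp add: wP_def wedge_def)

lemma walk_rev:
  assumes "walk adj c k" "\<And>x y. adj x y \<Longrightarrow> adj y x"
  shows "walk adj (wrev c k) k"
  unfolding walk_def wrev_def
proof (intro allI impI)
  fix t assume "t < k"
  then have "k - t = Suc (k - Suc t)" by simp
  then show "adj (c (k - t)) (c (k - Suc t))"
    using assms \<open>t < k\<close> unfolding walk_def by (metis diff_less_Suc less_le_trans not_less_eq_eq diff_le_self Suc_le_eq zero_less_Suc)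
qed

lemma wP_rev:
  assumes "\<And>x y. e x y = e y x"
  shows "wP e (wrev c k) k = wP e c k"
proof -
  have "wP e (wrev c k) k = (\<Prod>t<k. e (c (Suc (k - Suc t))) (c (k - Suc t)))"
    unfolding wP_def wrev_def by (intro prod.cong) (auto simp: Suc_diff_Suc)
  also have "\<dots> = (\<Prod>t<k. e (c (k - Suc t)) (c (Suc (k - Suc t))))"
    using assms by simp
  also have "\<dots> = wP e c k"
    unfolding wP_def by (rule prod.nat_diff_reindex)
  finally show ?thesis .
qed

lemma closed_walk_prod:
  fixes adj :: "'a \<Rightarrow> 'a \<Rightarrow> bool" and e :: "'a \<Rightarrow> 'a \<Rightarrow> real"
  assumes sym: "\<And>x y. adj x y \<Longrightarrow> adj y x" and irr: "\<And>x. \<not> adj x x"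
    and esym: "\<And>x y. e x y = e y x" and esq: "\<And>x y. e x y * e x y = 1"
    and chordless: "\<And>c k. walk adj c k \<Longrightarrow> c k = c 0 \<Longrightarrow> 3 \<le> k \<Longrightarrow> inj_on c {..<k} \<Longrightarrow>
        (\<forall>i<k. \<forall>j<k. adj (c i) (c j) \<longrightarrow> j = Suc i mod k \<or> i = Suc j mod k) \<Longrightarrow> wP e c k = 1"
  shows "walk adj c k \<Longrightarrow> c k = c 0 \<Longrightarrow> wP e c k = 1"
proof (induction k arbitrary: c rule: less_induct)
  case (less k c)
  note W = less.prems(1) and C = less.prems(2)
  show ?case
  proof (cases "\<exists>i j. i < j \<and> j < k \<and> c i = c j")
    case True
    then obtain i j where ij: "i < j" "j < k" "c i = c j" by blast
    have P1: "wP e (wseg c i) (j - i) = 1"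
      apply (rule less.IH)
      using ij W walk_seg[of adj c k i j] by (auto simp: wseg_def)
    let ?d = "wcat (wseg c 0) i (wseg c j)"
    have P2: "wP e ?d (i + (k - j)) = 1"
    proof (rule less.IH)
      show "i + (k - j) < k" using ij by simp
      show "walk adj ?d (i + (k - j))"
        by (rule walk_cat) (use ij W in \<open>auto simp: walk_seg2 walk_mono wseg_def\<close>)
      show "?d (i + (k - j)) = ?d 0"
        using ij C wcat_end[of "wseg c 0" i "wseg c j" "k - j"] by (simp add: wseg_def)
    qed
    have "wP e ?d (i + (k - j)) = wP e (wseg c 0) i * wP e (wseg c j) (k - j)"
      by (rule wP_cat) (use ij in \<open>simp add: wseg_def\<close>)
    then show ?thesis using wP_split3[of i j k e c] ij P1 P2 by (simp add: wseg_def)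
  next
    case noRep: False
    show ?thesis
    proof (cases "\<exists>i j. i < j \<and> j < k \<and> adj (c i) (c j) \<and> j \<noteq> Suc i \<and> \<not> (i = 0 \<and> Suc j = k)")
      case True
      then obtain i j where ij: "i < j" "j < k" "adj (c i) (c j)" "j \<noteq> Suc i" "\<not> (i = 0 \<and> Suc j = k)"
        by blast
      let ?d = "wcat (wseg c i) (j - i) (wedge (c j) (c i))"
      have P1: "wP e ?d ((j - i) + 1) = 1"
      proof (rule less.IH)
        show "j - i + 1 < k" using ij by (cases "i = 0") auto
        show "walk adj ?d (j - i + 1)"
        proof (rule walk_cat)
          show "walk adj (wseg c i) (j - i)" using walk_seg[OF W, of i j] ij by simp
          show "walk adj (wedge (c j) (c i)) 1" using walk_edge[of adj] sym ij by blast
          show "wseg c i (j - i) = wedge (c j) (c i) 0" using ij by (simp add: wseg_def wedge_def)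
        qed
        show "?d (j - i + 1) = ?d 0"
          by (subst wcat_end) (use ij in \<open>auto simp: wseg_def wedge_def\<close>)
      qed
      have D: "wP e ?d ((j - i) + 1) = wP e (wseg c i) (j - i) * e (c j) (c i)"
        using wP_cat[of "wseg c i" "j - i" "wedge (c j) (c i)" e 1] wP_edge[of e "c j" "c i"] ij
        by (simp add: wseg_def wedge_def)
      let ?p = "wcat (wseg c 0) i (wedge (c i) (c j))"
      let ?q = "wcat ?p (i + 1) (wseg c j)"
      have pw: "walk adj ?p (i + 1)"
      proof (rule walk_cat)
        show "walk adj (wseg c 0) i" using walk_seg[OF W, of 0 i] ij by simp
        show "walk adj (wedge (c i) (c j)) 1" using walk_edge[of adj] ij by blast
        show "wseg c 0 i = wedge (c i) (c j) 0" by (simp add: wseg_def wedge_def)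
      qed
      have pend: "?p (i + 1) = c j"
        by (subst wcat_end) (auto simp: wseg_def wedge_def)
      have P2: "wP e ?q ((i + 1) + (k - j)) = 1"
      proof (rule less.IH)
        show "i + 1 + (k - j) < k" using ij by simp
        show "walk adj ?q (i + 1 + (k - j))"
          by (rule walk_cat[OF pw]) (use ij W pend in \<open>auto simp: walk_seg2 walk_mono wseg_def\<close>)
        show "?q (i + 1 + (k - j)) = ?q 0"
          using ij C pend wcat_end[of ?p "i + 1" "wseg c j" "k - j"] by (simp add: wseg_def)
      qed
      have E: "wP e ?q ((i + 1) + (k - j)) = wP e (wseg c 0) i * e (c i) (c j) * wP e (wseg c j) (k - j)"
      proof -
        have "wP e ?q ((i + 1) + (k - j)) = wP e ?p (i + 1) * wP e (wseg c j) (k - j)"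
          by (rule wP_cat) (use pend in \<open>simp add: wseg_def\<close>)
        moreover have "wP e ?p (i + 1) = wP e (wseg c 0) i * wP e (wedge (c i) (c j)) 1"
          by (rule wP_cat) (simp add: wseg_def wedge_def)
        ultimately show ?thesis using wP_edge[of e "c i" "c j"] by simp
      qed
      have S: "wP e c k = wP e (wseg c 0) i * wP e (wseg c i) (j - i) * wP e (wseg c j) (k - j)"
        using wP_split3[of i j k e c] ij by simp
      have X: "(wP e ?d ((j - i) + 1)) * (wP e ?q ((i + 1) + (k - j))) =
          (wP e (wseg c 0) i * wP e (wseg c i) (j - i) * wP e (wseg c j) (k - j)) * (e (c i) (c j) * e (c i) (c j))"
        unfolding D E using esym[of "c j" "c i"] by (simp add: algebra_simps)
      show ?thesis using X P1 P2 S esq[of "c i" "c j"] by simp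
    next
      case noChord: False
      have inj: "inj_on c {..<k}"
        unfolding inj_on_def
      proof (intro ballI impI)
        fix x y assume "x \<in> {..<k}" "y \<in> {..<k}" "c x = c y"
        then show "x = y" using noRep by (metis lessThan_iff linorder_neqE_nat)
      qed
      have ch: "\<forall>i<k. \<forall>j<k. adj (c i) (c j) \<longrightarrow> j = Suc i mod k \<or> i = Suc j mod k"
      proof (intro allI impI)
        fix i j assume i: "i < k" and j: "j < k" and a: "adj (c i) (c j)"
        consider "i < j" | "i = j" | "j < i" by linarith
        then show "j = Suc i mod k \<or> i = Suc j mod k"
        proof cases
          case 1
          then have "j = Suc i \<or> (i = 0 \<and> Suc j = k)" using noChord j a by blast
          then show ?thesis using j by auto
        next
          case 2 then show ?thesis using a irr by simp
        next
          case 3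
          then have "i = Suc j \<or> (j = 0 \<and> Suc i = k)" using noChord i sym[OF a] by blast
          then show ?thesis using i by auto
        qed
      qed
      consider "k = 0" | "k = 1" | "k = 2" | "3 \<le> k" by linarith
      then show ?thesis
      proof cases
        case 1 then show ?thesis by (simp add: wP_def)
      next
        case 2 then show ?thesis using W C irr by (simp add: walk_def)
      next
        case 3 then show ?thesis using C esym esq by (simp add: wP_def numeral_2_eq_2 lessThan_Suc)
      next
        case 4 then show ?thesis using chordless W C inj ch by blast
      qed
    qed
  qed
qed

lemma wP_sq: "(\<And>x y. e x y * e x y = 1) \<Longrightarrow> wP e c k * wP e c k = 1"
  unfolding wP_def prod.distrib[symmetric] by simp

lemma switching:
  fixes adj :: "'a \<Rightarrow> 'a \<Rightarrow> bool" and e :: "'a \<Rightarrow> 'a \<Rightarrow> real"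
  assumes sym: "\<And>x y. adj x y \<Longrightarrow> adj y x"
    and esym: "\<And>x y. e x y = e y x" and esq: "\<And>x y. e x y * e x y = 1"
    and closed: "\<And>c k. walk adj c k \<Longrightarrow> c k = c 0 \<Longrightarrow> wP e c k = 1"
  shows "\<exists>s. (\<forall>x. s x * s x = 1) \<and> (\<forall>x y. adj x y \<longrightarrow> e x y = s x * s y)"
proof -
  define reach where "reach x y \<longleftrightarrow> (\<exists>c k. walk adj c k \<and> c 0 = x \<and> c k = y)" for x y
  have rrefl: "reach x x" for x
    unfolding reach_def by (rule exI[of _ "\<lambda>_. x"], rule exI[of _ 0]) (simp add: walk_def)
  have rsym: "reach y x" if "reach x y" for x y
  proof -
    from that obtain c k where "walk adj c k" "c 0 = x" "c k = y" unfolding reach_def by blast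
    then show ?thesis unfolding reach_def
      using walk_rev[of adj c k] sym
      by (intro exI[of _ "wrev c k"] exI[of _ k]) (simp add: wrev_def)
  qed
  have rtrans: "reach x z" if "reach x y" "reach y z" for x y z
  proof -
    from that obtain c k d l where "walk adj c k" "c 0 = x" "c k = y" "walk adj d l" "d 0 = y" "d l = z"
      unfolding reach_def by blast
    then show ?thesis unfolding reach_def
      by (intro exI[of _ "wcat c k d"] exI[of _ "k + l"]) (simp add: walk_cat wcat_end)
  qed
  define root where "root x = (SOME r. reach x r)" for x
  have root_eq: "root x = root y" if "reach x y" for x y
  proof -
    have "(\<lambda>r. reach x r) = (\<lambda>r. reach y r)"
      using that rsym rtrans by blast
    then show ?thesis unfolding root_def by simp
  qed
  have rroot: "reach (root x) x" for x
    unfolding root_def using someI[of "\<lambda>r. reach x r" x] rrefl rsym by blast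
  define W where "W x = (SOME ck. walk adj (fst ck) (snd ck) \<and> fst ck 0 = root x \<and> fst ck (snd ck) = x)" for x
  have Wp: "walk adj (fst (W x)) (snd (W x)) \<and> fst (W x) 0 = root x \<and> fst (W x) (snd (W x)) = x" for x
  proof -
    have "\<exists>ck. walk adj (fst ck) (snd ck) \<and> fst ck 0 = root x \<and> fst ck (snd ck) = x"
      using rroot[of x] unfolding reach_def by auto
    then show ?thesis unfolding W_def by (rule someI_ex)
  qed
  define s where "s x = wP e (fst (W x)) (snd (W x))" for x
  have ssq: "s x * s x = 1" for x unfolding s_def by (rule wP_sq[OF esq])
  have "e x y = s x * s y" if a: "adj x y" for x y
  proof -
    obtain p m where pm: "W x = (p, m)" by fastforce
    obtain q n where qn: "W y = (q, n)" by fastforce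
    have rxy: "root x = root y"
      using a by (intro root_eq) (auto simp: reach_def intro!: exI[of _ "wedge x y"] exI[of _ 1] walk_edge simp: wedge_def)
    have p: "walk adj p m" "p 0 = root x" "p m = x" using Wp[of x] pm by auto
    have q: "walk adj q n" "q 0 = root y" "q n = y" using Wp[of y] qn by auto
    let ?a = "wcat p m (wedge x y)"
    let ?c = "wcat ?a (m + 1) (wrev q n)"
    have aw: "walk adj ?a (m + 1)"
      by (rule walk_cat) (use p walk_edge[of adj x y, OF a] in \<open>auto simp: wedge_def\<close>)
    have aend: "?a (m + 1) = y" using p wcat_end[of p m "wedge x y" 1] by (simp add: wedge_def)
    have cw: "walk adj ?c (m + 1 + n)"
      by (rule walk_cat[OF aw]) (use q aend walk_rev[of adj q n] sym in \<open>auto simp: wrev_def\<close>)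
    have cend: "?c (m + 1 + n) = ?c 0"
      using aend q p rxy wcat_end[of ?a "m + 1" "wrev q n" n] by (simp add: wrev_def)
    have "wP e ?c (m + 1 + n) = wP e ?a (m + 1) * wP e (wrev q n) n"
      by (rule wP_cat) (use aend q in \<open>simp add: wrev_def\<close>)
    also have "wP e ?a (m + 1) = wP e p m * e x y"
      using wP_cat[of p m "wedge x y" e 1] p wP_edge[of e x y] by (simp add: wedge_def)
    also have "wP e (wrev q n) n = wP e q n" using wP_rev esym by blast
    finally have "wP e p m * e x y * wP e q n = 1" using closed[OF cw cend] by simp
    then have "s x * e x y * s y = 1" unfolding s_def pm qn by simp
    then have "(s x * s x) * e x y * (s y * s y) = s x * s y" by (metis mult.assoc mult.commute mult_1)
    then show ?thesis using ssq by simp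
  qed
  then show ?thesis using ssq by blast
qed

lemma suc_mod_if: "i < k \<Longrightarrow> Suc i mod (k::nat) = (if Suc i = k then 0 else Suc i)"
  by auto

lemma chordless_sign:
  fixes F :: "'b \<Rightarrow> 'a::real_inner" and c :: "nat \<Rightarrow> 'b"
  assumes injF: "inj F" and indep: "independent (range F)" and unit: "\<And>i. F i \<bullet> F i = 1"
    and k3: "3 \<le> k" and ck: "c k = c 0" and injc: "inj_on c {..<k}"
    and lb: "\<And>t. t < k \<Longrightarrow> 1/2 \<le> \<bar>F (c t) \<bullet> F (c (Suc t))\<bar>"
    and zero: "\<And>i j. i < k \<Longrightarrow> j < k \<Longrightarrow> i \<noteq> j \<Longrightarrow> j \<noteq> Suc i mod k \<Longrightarrow> i \<noteq> Suc j mod k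
        \<Longrightarrow> F (c i) \<bullet> F (c j) = 0"
  shows "(\<Prod>t<k. sgn (F (c t) \<bullet> F (c (Suc t)))) = (-1)^(k+1)"
proof (rule ccontr)
  define a where "a t = F (c t) \<bullet> F (c (Suc t))" for t
  define P where "P = (\<Prod>t<k. sgn (a t))"
  assume "(\<Prod>t<k. sgn (F (c t) \<bullet> F (c (Suc t)))) \<noteq> (-1)^(k+1)"
  then have Pne: "P \<noteq> (-1)^(k+1)" unfolding P_def a_def .
  have sgnsq: "sgn (a t) * sgn (a t) = 1" if "t < k" for t
    using lb[OF that] unfolding a_def by (cases "a t > 0") (auto simp: sgn_if a_def)
  have "P * P = 1" unfolding P_def prod.distrib[symmetric] using sgnsq by simp
  then have "P = 1 \<or> P = -1" by (metis square_eq_1_iff power2_eq_square)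
  then have Pk: "P = (-1)^k" using Pne by (cases "even k") auto
  define T where "T i = (-1)^i * (\<Prod>t<i. sgn (a t))" for i :: nat
  have Tsuc: "T (Suc i) = - T i * sgn (a i)" for i
    unfolding T_def by simp
  have T0: "T 0 = 1" unfolding T_def by simp
  have Tk: "T k = 1" unfolding T_def P_def[symmetric] Pk by (simp flip: power_add add: power_even_eq)
  have Tsq: "T i * T i = 1" if "i \<le> k" for i
    using that
  proof (induction i)
    case 0 then show ?case by (simp add: T0)
  next
    case (Suc i)
    then have "T i * T i = 1" "sgn (a i) * sgn (a i) = 1" using sgnsq by auto
    then show ?case unfolding Tsuc by (simp add: algebra_simps)
  qed
  define N where "N i = Suc i mod k" for i
  have Nlt: "N i < k" for i unfolding N_def using k3 by simp
  have TN: "T (N i) = T (Suc i)" "c (N i) = c (Suc i)" if "i < k" for i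
    using that T0 Tk ck by (auto simp: N_def suc_mod_if)
  define M where "M i j = T i * T j * (F (c i) \<bullet> F (c j))" for i j
  have Mdiag: "M i i = 1" if "i < k" for i using Tsq[of i] that unit by (simp add: M_def)
  have Mnext: "M i (N i) = - \<bar>a i\<bar>" if "i < k" for i
  proof -
    have "M i (N i) = T i * T (Suc i) * a i" using TN[OF that] by (simp add: M_def a_def)
    also have "\<dots> = - (T i * T i) * (sgn (a i) * a i)" unfolding Tsuc by (simp add: algebra_simps)
    also have "\<dots> = - \<bar>a i\<bar>" using Tsq[of i] that by (auto simp: sgn_if)
    finally show ?thesis .
  qed
  have Mnext': "M (N i) i = - \<bar>a i\<bar>" if "i < k" for i
    using Mnext[OF that] by (simp add: M_def inner_commute mult.commute)
  have Nne: "N i \<noteq> i" if "i < k" for i using that k3 by (auto simp: N_def suc_mod_if)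
  have NNne: "N (N i) \<noteq> i" if "i < k" for i using that k3 by (auto simp: N_def suc_mod_if)
  have decomp: "M i j = (if j = i then M i j else 0) + (if j = N i then M i j else 0) + (if i = N j then M i j else 0)"
    if "i < k" "j < k" for i j
  proof (cases "j = i \<or> j = N i \<or> i = N j")
    case True
    then show ?thesis using Nne[OF that(1)] Nne[OF that(2)] NNne[OF that(1)] by auto
  next
    case False
    then have "F (c i) \<bullet> F (c j) = 0" using zero[OF that] unfolding N_def by auto
    then show ?thesis using False by (simp add: M_def)
  qed
  define z where "z = (\<Sum>i<k. T i *\<^sub>R F (c i))"
  have "z \<bullet> z = (\<Sum>i<k. \<Sum>j<k. M i j)"
    unfolding z_def M_def by (simp add: inner_sum_left inner_sum_right sum_distrib_left mult.assoc mult.left_commute inner_commute)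
  also have "\<dots> = (\<Sum>i<k. \<Sum>j<k. (if j = i then M i j else 0) + (if j = N i then M i j else 0) + (if i = N j then M i j else 0))"
    by (intro sum.cong refl) (use decomp in auto)
  also have "\<dots> = (\<Sum>i<k. M i i) + (\<Sum>i<k. M i (N i)) + (\<Sum>i<k. \<Sum>j<k. (if i = N j then M i j else 0))"
    using Nlt by (simp add: sum.distrib)
  also have "(\<Sum>i<k. \<Sum>j<k. (if i = N j then M i j else 0)) = (\<Sum>j<k. M (N j) j)"
    by (subst sum.swap) (simp add: Nlt)
  also have "(\<Sum>i<k. M i i) = (\<Sum>i<k. 1)" using Mdiag by simp
  also have "(\<Sum>i<k. M i (N i)) = (\<Sum>i<k. - \<bar>a i\<bar>)" using Mnext by simp
  also have "(\<Sum>j<k. M (N j) j) = (\<Sum>i<k. - \<bar>a i\<bar>)" using Mnext' by simp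
  finally have zz: "z \<bullet> z = real k - 2 * (\<Sum>i<k. \<bar>a i\<bar>)" by (simp add: sum_negf)
  have "(\<Sum>i<k. (1/2::real)) \<le> (\<Sum>i<k. \<bar>a i\<bar>)"
    by (intro sum_mono) (use lb in \<open>auto simp: a_def\<close>)
  then have "z \<bullet> z \<le> 0" using zz by simp
  then have "z \<bullet> z = 0" using inner_ge_zero[of z] by linarith
  then have z0: "z = 0" by simp
  let ?S = "(\<lambda>i. F (c i)) ` {..<k}"
  have injFc: "inj_on (\<lambda>i. F (c i)) {..<k}"
    using injc injF unfolding inj_on_def inj_def by blast
  define u where "u v = T (the_inv_into {..<k} (\<lambda>i. F (c i)) v)" for v
  have "(\<Sum>v\<in>?S. u v *\<^sub>R v) = z"
    unfolding z_def by (subst sum.reindex[OF injFc]) (simp add: u_def the_inv_into_f_f[OF injFc])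
  moreover have "?S \<subseteq> range F" by auto
  ultimately have "\<forall>v\<in>?S. u v = 0"
    using indep z0 unfolding independent_explicit_finite_subsets by blast
  moreover have "u (F (c 0)) = 1"
    using k3 T0 by (simp add: u_def the_inv_into_f_f[OF injFc])
  moreover have "F (c 0) \<in> ?S" using k3 by auto
  ultimately show False by auto
qed

lemma span_range_UNIV:
  fixes f :: "'n::finite \<Rightarrow> real^'n"
  assumes "inj f" "independent (range f)"
  shows "span (range f) = UNIV"
proof -
  have "card (range f) = CARD('n)" using assms(1) by (simp add: card_image)
  then have "UNIV \<subseteq> span (range f)"
    by (intro card_ge_dim_independent assms(2)) auto
  then show ?thesis by auto
qed

lemma expand_basis:
  fixes f :: "'n::finite \<Rightarrow> real^'n"
  assumes "inj f" "independent (range f)"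
  shows "\<exists>u. v = (\<Sum>i\<in>UNIV. u i *\<^sub>R f i)"
proof -
  have "v \<in> span (range f)" using span_range_UNIV[OF assms] by simp
  then obtain w where "v = (\<Sum>x\<in>range f. w x *\<^sub>R x)" using span_finite[of "range f"] by auto
  also have "\<dots> = (\<Sum>i\<in>UNIV. w (f i) *\<^sub>R f i)"
    by (subst sum.reindex) (use assms(1) in auto)
  finally show ?thesis by (intro exI[of _ "\<lambda>i. w (f i)"])
qed

lemma orth_from_basis:
  fixes f h :: "'n::finite \<Rightarrow> real^'n"
  assumes injf: "inj f" and ind: "independent (range f)" and ip: "\<And>i j. h i \<bullet> h j = f i \<bullet> f j"
  shows "\<exists>Q. orthogonal_transformation Q \<and> (\<forall>i. Q (f i) = h i)"
proof -
  obtain Q where lin: "linear Q" and Qf: "\<forall>x\<in>range f. Q x = h (inv f x)"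
    using linear_independent_extend[OF ind, of "\<lambda>x. h (inv f x)"] by blast
  have Qfi: "Q (f i) = h i" for i using Qf injf by simp
  have "Q v \<bullet> Q w = v \<bullet> w" for v w
  proof -
    obtain u where u: "v = (\<Sum>i\<in>UNIV. u i *\<^sub>R f i)" using expand_basis[OF injf ind] by blast
    obtain u' where u': "w = (\<Sum>i\<in>UNIV. u' i *\<^sub>R f i)" using expand_basis[OF injf ind] by blast
    have Qv: "Q v = (\<Sum>i\<in>UNIV. u i *\<^sub>R h i)" unfolding u
      by (simp add: linear_sum[OF lin] linear_scale[OF lin] Qfi)
    have Qw: "Q w = (\<Sum>i\<in>UNIV. u' i *\<^sub>R h i)" unfolding u'
      by (simp add: linear_sum[OF lin] linear_scale[OF lin] Qfi)
    have "(\<Sum>i\<in>UNIV. u i *\<^sub>R h i) \<bullet> (\<Sum>i\<in>UNIV. u' i *\<^sub>R h i)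
        = (\<Sum>i\<in>UNIV. u i *\<^sub>R f i) \<bullet> (\<Sum>i\<in>UNIV. u' i *\<^sub>R f i)"
      by (simp add: inner_sum_left inner_sum_right ip)
    then show ?thesis using Qv Qw u u' by simp
  qed
  then have "orthogonal_transformation Q" unfolding orthogonal_transformation_def using lin by blast
  then show ?thesis using Qfi by blast
qed

lemma fd_val:
  assumes "normal_angle f i j = pi * r" and r: "r \<in> {1/2, 1/3, 2/3, 1/4, 3/4}"
  shows "family_diagram f i j = (if r = 1/2 then 0 else if r = 1/3 \<or> r = 2/3 then 1 else 2)"
proof -
  let ?m = "(if r = 1/2 then 0 else if r = 1/3 \<or> r = 2/3 then 1 else 2) :: nat"
  have eqv: "(normal_angle f i j = pi / real k \<or> normal_angle f i j = pi * real (k - 1) / real k)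
      \<longleftrightarrow> (r * real k = 1 \<or> r * real k = real k - 1)" if "k \<ge> 2" for k :: nat
  proof -
    have kp: "real k > 0" using that by simp
    have "normal_angle f i j = pi / real k \<longleftrightarrow> r * real k = 1"
      unfolding assms(1) using kp pi_gt_zero by (simp add: field_simps)
    moreover have "normal_angle f i j = pi * real (k - 1) / real k \<longleftrightarrow> r * real k = real k - 1"
      unfolding assms(1) using kp pi_gt_zero that by (simp add: field_simps of_nat_diff) (metis distrib_left mult.right_neutral mult_cancel_left pi_neq_zero)
    ultimately show ?thesis by simp
  qed
  have ex: "\<exists>k::nat. k \<ge> 2 \<and> ?m = k - 2 \<and> (r * real k = 1 \<or> r * real k = real k - 1)"
    using r by (elim insertE emptyE)
      (auto intro: exI[of _ 2] exI[of _ 3] exI[of _ 4])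
  have un: "m = ?m" if "k \<ge> 2" "m = k - 2" "r * real k = 1 \<or> r * real k = real k - 1" for k m
  proof -
    have "real k = 2 \<or> real k = 3 \<or> real k = 4"
      using r that(3) by (elim insertE emptyE) (auto simp: field_simps)
    then have "k = 2 \<or> k = 3 \<or> k = 4" by linarith
    then show ?thesis using r that by (elim insertE emptyE) (auto simp: field_simps)
  qed
  show ?thesis unfolding family_diagram_def
  proof (rule the_equality)
    show "\<exists>k::nat. k \<ge> 2 \<and> ?m = k - 2 \<and> (normal_angle f i j = pi / real k \<or> normal_angle f i j = pi * real (k - 1) / real k)"
      using ex eqv by blast
    show "m = ?m" if "\<exists>k::nat. k \<ge> 2 \<and> m = k - 2 \<and> (normal_angle f i j = pi / real k \<or> normal_angle f i j = pi * real (k - 1) / real k)" for m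
      using that eqv un by blast
  qed
qed

lemma angle_facts:
  fixes f :: "'n::finite \<Rightarrow> real^'n"
  assumes "norm (f i) = 1" "norm (f j) = 1"
    and d: "dihedral_angle f i j \<in> {pi/2, pi/3, 2*pi/3, pi/4, 3*pi/4}"
  shows "(f i \<bullet> f j = 0 \<and> family_diagram f i j = 0) \<or>
         (\<bar>f i \<bullet> f j\<bar> = 1/2 \<and> family_diagram f i j = 1) \<or>
         (\<bar>f i \<bullet> f j\<bar> = sqrt 2 / 2 \<and> family_diagram f i j = 2)"
proof -
  have cs: "\<bar>f i \<bullet> f j\<bar> \<le> 1" using Cauchy_Schwarz_ineq2[of "f i" "f j"] assms by simp
  have c: "cos (normal_angle f i j) = f i \<bullet> f j"
    unfolding normal_angle_def using cs by (intro cos_arccos) auto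
  define r where "r = normal_angle f i j / pi"
  have na: "normal_angle f i j = pi * r" unfolding r_def by simp
  have "normal_angle f i j \<in> {pi/2, 2*pi/3, pi/3, 3*pi/4, pi/4}"
    using d unfolding dihedral_angle_def by (auto simp: field_simps)
  then have r5: "r \<in> {1/2, 1/3, 2/3, 1/4, 3/4}" unfolding r_def by auto
  have fd: "family_diagram f i j = (if r = 1/2 then 0 else if r = 1/3 \<or> r = 2/3 then 1 else 2)"
    by (rule fd_val[OF na r5])
  have cos135: "cos (pi * (3/4)) = - (sqrt 2 / 2)"
  proof -
    have "cos (pi * (3/4)) = cos (pi - pi/4)" by (simp add: field_simps)
    also have "\<dots> = - cos (pi/4)" by (rule cos_pi_minus)
    finally show ?thesis by (simp add: cos_45)
  qed
  have x: "f i \<bullet> f j = cos (pi * r)" using c na by simp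
  from r5 consider "r = 1/2" | "r = 1/3" | "r = 2/3" | "r = 1/4" | "r = 3/4" by blast
  then show ?thesis
  proof cases
    case 1
    then have "f i \<bullet> f j = cos (pi / 2)" using x[unfolded 1] by (simp add: field_simps)
    then show ?thesis using fd 1 by simp
  next
    case 2
    then have "f i \<bullet> f j = cos (pi / 3)" using x[unfolded 2] by (simp add: field_simps)
    then show ?thesis using fd 2 cos_60 by simp
  next
    case 3
    then have "f i \<bullet> f j = cos (pi * 2 / 3)" using x[unfolded 3] by (simp add: field_simps)
    then show ?thesis using fd 3 cos_120' by simp
  next
    case 4
    then have "f i \<bullet> f j = cos (pi / 4)" using x[unfolded 4] by (simp add: field_simps)
    then have xx: "f i \<bullet> f j = sqrt 2 / 2" using cos_45 by simp
    have "family_diagram f i j = 2" using fd 4 by simp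
    then show ?thesis unfolding xx by simp
  next
    case 5
    then have "f i \<bullet> f j = cos (pi * (3/4))" using x[unfolded 5] by simp
    then show ?thesis using fd 5 cos135 by simp
  qed
qed

lemma sg_lemma: "\<bar>a::real\<bar> = \<bar>b\<bar> \<Longrightarrow> a \<noteq> 0 \<Longrightarrow> (if a = b then 1 else -1) = sgn a * sgn b"
  by (cases "a > 0"; cases "b > 0") (auto simp: sgn_if abs_if split: if_splits)

theorem lemma2:
  fixes \<Gamma> :: "'v \<Rightarrow> 'v \<Rightarrow> nat"
    and f g :: "'n::finite \<Rightarrow> real^'n"
    and \<sigma> \<tau> :: "'n \<Rightarrow> 'v"
  assumes "simplex_normals f" and "simplex_normals g"
    and "\<And>i j. i \<noteq> j \<Longrightarrow>
           dihedral_angle f i j \<in> {pi/2, pi/3, 2*pi/3, pi/4, 3*pi/4}"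
    and "\<And>i j. i \<noteq> j \<Longrightarrow>
           dihedral_angle g i j \<in> {pi/2, pi/3, 2*pi/3, pi/4, 3*pi/4}"
    and "bij \<sigma>" and "\<And>i j. i \<noteq> j \<Longrightarrow> family_diagram f i j = \<Gamma> (\<sigma> i) (\<sigma> j)"
    and "bij \<tau>" and "\<And>i j. i \<noteq> j \<Longrightarrow> family_diagram g i j = \<Gamma> (\<tau> i) (\<tau> j)"
  shows "\<exists>Q. orthogonal_transformation Q \<and> Q ` family_vectors f = family_vectors g"
proof -
  have nf: "\<And>i. norm (f i) = 1" and injf: "inj f" and indf: "independent (range f)"
    using assms(1) unfolding simplex_normals_def by auto
  have ng: "\<And>i. norm (g i) = 1" and injg: "inj g" and indg: "independent (range g)"
    using assms(2) unfolding simplex_normals_def by auto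
  define p where "p = inv \<tau> \<circ> \<sigma>"
  have bp: "bij p" unfolding p_def using assms(5,7) by (simp add: bij_comp bij_imp_bij_inv)
  have tp: "\<tau> (p i) = \<sigma> i" for i
    unfolding p_def using assms(7) by (simp add: bij_is_surj surj_f_inv_f)
  define h where "h i = g (p i)" for i
  have nh: "norm (h i) = 1" for i unfolding h_def using ng by simp
  have injh: "inj h"
    using inj_compose[OF injg bij_is_inj[OF bp]] unfolding h_def o_def .
  have "range h = g ` range p" unfolding h_def by (rule image_image[symmetric])
  then have rh: "range h = range g" using bij_is_surj[OF bp] by simp
  have indh: "independent (range h)" using rh indg by simp
  define A where "A i j = f i \<bullet> f j" for i j
  define B where "B i j = h i \<bullet> h j" for i j
  have s2: "1/2 \<le> sqrt 2 / 2" by simp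
  have key: "\<bar>A i j\<bar> = \<bar>B i j\<bar> \<and> (A i j = 0 \<or> 1/2 \<le> \<bar>A i j\<bar>)" if ij: "i \<noteq> j" for i j
  proof -
    have pij: "p i \<noteq> p j" using ij bp by (metis bij_is_inj injD)
    have d: "family_diagram g (p i) (p j) = family_diagram f i j"
      using assms(6)[OF ij] assms(8)[OF pij] tp by simp
    have F1: "(A i j = 0 \<and> family_diagram f i j = 0) \<or>
         (\<bar>A i j\<bar> = 1/2 \<and> family_diagram f i j = 1) \<or>
         (\<bar>A i j\<bar> = sqrt 2 / 2 \<and> family_diagram f i j = 2)"
      unfolding A_def using angle_facts[OF nf nf assms(3)[OF ij]] .
    have F2: "(B i j = 0 \<and> family_diagram g (p i) (p j) = 0) \<or>
         (\<bar>B i j\<bar> = 1/2 \<and> family_diagram g (p i) (p j) = 1) \<or>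
         (\<bar>B i j\<bar> = sqrt 2 / 2 \<and> family_diagram g (p i) (p j) = 2)"
      unfolding B_def h_def using angle_facts[OF ng ng assms(4)[OF pij]] .
    show ?thesis using F1 F2 d s2 by auto
  qed
  define adj where "adj i j \<longleftrightarrow> i \<noteq> j \<and> A i j \<noteq> 0" for i j
  define e where "e i j = (if A i j = B i j then 1 else -1 :: real)" for i j
  have Asym: "A i j = A j i" for i j unfolding A_def by (simp add: inner_commute)
  have Bsym: "B i j = B j i" for i j unfolding B_def by (simp add: inner_commute)
  have unitf: "f i \<bullet> f i = 1" for i using nf[of i] by (simp add: power2_norm_eq_inner[symmetric])
  have unith: "h i \<bullet> h i = 1" for i using nh[of i] by (simp add: power2_norm_eq_inner[symmetric])
  have cyc: "wP e c k = 1" if "walk adj c k" "c k = c 0" for c k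
  proof (rule closed_walk_prod[OF _ _ _ _ _ that])
    show "adj x y \<Longrightarrow> adj y x" for x y unfolding adj_def using Asym by auto
    show "\<not> adj x x" for x unfolding adj_def by simp
    show "e x y = e y x" for x y unfolding e_def using Asym Bsym by simp
    show "e x y * e x y = 1" for x y unfolding e_def by simp
  next
    fix c k assume W: "walk adj c k" and C: "c k = c 0" and k3: "3 \<le> k" and injc: "inj_on c {..<k}"
      and ch: "\<forall>i<k. \<forall>j<k. adj (c i) (c j) \<longrightarrow> j = Suc i mod k \<or> i = Suc j mod k"
    have edge: "c t \<noteq> c (Suc t) \<and> A (c t) (c (Suc t)) \<noteq> 0" if "t < k" for t
      using W that unfolding walk_def adj_def by blast
    have lbA: "1/2 \<le> \<bar>A (c t) (c (Suc t))\<bar>" if "t < k" for t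
      using key[of "c t" "c (Suc t)"] edge[OF that] by auto
    have lbB: "1/2 \<le> \<bar>B (c t) (c (Suc t))\<bar>" if "t < k" for t
      using key[of "c t" "c (Suc t)"] edge[OF that] by auto
    have zA: "A (c i) (c j) = 0" if "i < k" "j < k" "i \<noteq> j" "j \<noteq> Suc i mod k" "i \<noteq> Suc j mod k" for i j
    proof (rule ccontr)
      assume "A (c i) (c j) \<noteq> 0"
      moreover have "c i \<noteq> c j" using injc that by (auto dest: inj_onD)
      ultimately have "adj (c i) (c j)" unfolding adj_def by simp
      then show False using ch that by blast
    qed
    have zB: "B (c i) (c j) = 0" if "i < k" "j < k" "i \<noteq> j" "j \<noteq> Suc i mod k" "i \<noteq> Suc j mod k" for i j
      using zA[OF that] key[of "c i" "c j"] injc that by (auto dest: inj_onD)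
    have SA: "(\<Prod>t<k. sgn (f (c t) \<bullet> f (c (Suc t)))) = (-1)^(k+1)"
      by (rule chordless_sign[OF injf indf unitf k3 C injc]) (use lbA zA in \<open>auto simp: A_def\<close>)
    have SB: "(\<Prod>t<k. sgn (h (c t) \<bullet> h (c (Suc t)))) = (-1)^(k+1)"
      by (rule chordless_sign[OF injh indh unith k3 C injc]) (use lbB zB in \<open>auto simp: B_def\<close>)
    have "wP e c k = (\<Prod>t<k. sgn (A (c t) (c (Suc t))) * sgn (B (c t) (c (Suc t))))"
      unfolding wP_def e_def
    proof (rule prod.cong[OF refl])
      fix t assume "t \<in> {..<k}"
      then have "t < k" by simp
      show "(if A (c t) (c (Suc t)) = B (c t) (c (Suc t)) then 1 else -1) =
          sgn (A (c t) (c (Suc t))) * sgn (B (c t) (c (Suc t)))"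
        using sg_lemma key[of "c t" "c (Suc t)"] edge[OF \<open>t < k\<close>] by blast
    qed
    also have "\<dots> = (-1)^(k+1) * (-1)^(k+1)"
      using SA SB by (simp add: prod.distrib A_def B_def)
    also have "\<dots> = 1" by (simp flip: power_add add: power_even_eq)
    finally show "wP e c k = 1" .
  qed
  obtain s where ssq: "\<And>x. s x * s x = 1" and se: "\<And>x y. adj x y \<Longrightarrow> e x y = s x * s y"
  proof -
    have "\<exists>s. (\<forall>x. s x * s x = 1) \<and> (\<forall>x y. adj x y \<longrightarrow> e x y = s x * s y)"
    proof (rule switching)
      show "adj x y \<Longrightarrow> adj y x" for x y unfolding adj_def using Asym by auto
      show "e x y = e y x" for x y unfolding e_def using Asym Bsym by simp
      show "e x y * e x y = 1" for x y unfolding e_def by simp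
      show "walk adj c k \<Longrightarrow> c k = c 0 \<Longrightarrow> wP e c k = 1" for c k using cyc by blast
    qed
    then show ?thesis using that by blast
  qed
  have s1: "s x = 1 \<or> s x = -1" for x using ssq[of x] by (metis square_eq_1_iff power2_eq_square)
  have G: "(s i *\<^sub>R h i) \<bullet> (s j *\<^sub>R h j) = f i \<bullet> f j" for i j
  proof (cases "i = j")
    case True then show ?thesis using ssq[of i] unitf[of i] unith[of i] by simp
  next
    case False
    have "s i * s j * B i j = A i j"
    proof (cases "adj i j")
      case True
      then have "e i j = s i * s j" by (rule se)
      moreover have "A i j \<noteq> 0" using True unfolding adj_def by simp
      moreover have "B i j = A i j \<or> B i j = - A i j"
        using key[OF False] by (auto simp: abs_if split: if_splits)
      ultimately have "(s i * s j = 1 \<and> B i j = A i j) \<or> (s i * s j = -1 \<and> B i j = - A i j)"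
        unfolding e_def by (auto split: if_splits)
      then show ?thesis by auto
    next
      case nadj: False
      then have "A i j = 0" unfolding adj_def using False by simp
      then show ?thesis using key[OF False] by simp
    qed
    then show ?thesis unfolding A_def B_def by (simp add: algebra_simps)
  qed
  obtain Q where oQ: "orthogonal_transformation Q" and Qf: "\<And>i. Q (f i) = s i *\<^sub>R h i"
    using orth_from_basis[OF injf indf G] by blast
  have linQ: "linear Q" using oQ by (rule orthogonal_transformation_linear)
  have Qnf: "Q (- f i) = - (s i *\<^sub>R h i)" for i using Qf linear_neg[OF linQ] by simp
  have "Q ` family_vectors f = family_vectors g"
  proof
    show "Q ` family_vectors f \<subseteq> family_vectors g"
    proof
      fix w assume "w \<in> Q ` family_vectors f"
      then obtain i where "w = Q (f i) \<or> w = Q (- f i)" unfolding family_vectors_def by blast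
      then show "w \<in> family_vectors g"
        unfolding family_vectors_def h_def using Qf Qnf s1[of i] by (auto simp: h_def)
    qed
    show "family_vectors g \<subseteq> Q ` family_vectors f"
    proof
      fix w assume "w \<in> family_vectors g"
      then obtain m where wm: "w = g m \<or> w = - g m" unfolding family_vectors_def by blast
      obtain i where mi: "m = p i" using bp by (metis bij_is_surj surjD)
      have fi: "f i \<in> family_vectors f" "- f i \<in> family_vectors f" unfolding family_vectors_def by auto
      have "w = Q (f i) \<or> w = Q (- f i)"
        using wm s1[of i] Qf[of i] Qnf[of i] unfolding mi h_def by auto
      then show "w \<in> Q ` family_vectors f" using fi by blast
    qed
  qed
  then show ?thesis using oQ by blast
qed

end
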